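(* For all $n\in\mathbb N$ the following hold in the $q$-shuffle algebra $\mathbb V$: $$xC_n=(-1)^nq^{-n}\sum_{i=0}^n W_{-i}\star D_{n-i}=(-1)^nq^{n}\sum_{i=0}^n D_{n-i}\star W_{-i},$$ $$C_ny=(-1)^nq^{-n}\sum_{i=0}^n D_{n-i}\star W_{i+1}=(-1)^nq^{n}\sum_{i=0}^n W_{i+1}\star D_{n-i}.$$ Here $xC_n$ and $C_ny$ denote concatenation products in the free algebra.
   Context: Let $\mathbb F$ be a field and let $q\in\mathbb F$ be nonzero and not a root of unity. Let $[m]_q=(q^m-q^{-m})/(q-q^{-1})$. Let $\mathbb V$ be the free associative $\mathbb F$-algebra on noncommuting $x,y$, with basis the words (including $1$). Juxtaposition denotes concatenation. Set $\langle x,x\rangle=\langle y,y\rangle=2$ and $\langle x,y\rangle=\langle y,x\rangle=-2$. The $q$-shuffle product $\star$ is the bilinear product determined as follows: - $1\star v=v\star 1=v$; - for nontrivial words $u=u_1\cdots u_r$ and $v=v_1\cdots v_s$, $$u\star v=u_1((u_2\cdots u_r)\star v)+v_1(u\star(v_2\cdots v_s))q^{\langle u_1,v_1\rangle+\cdots+\langle u_r,v_1\rangle}.$$ This makes $\mathbb V$ an associative algebra, the $q$-shuffle algebra. For $k\in\mathbb N$: - $W_{-k}=xyx\cdots x$ is the alternating word of length $2k+1$ beginning and ending with $x$; - $W_{k+1}=yxy\cdots y$ is the alternating word of length $2k+1$ beginning and ending with $y$; - $\tilde G_k=xyxy\cdots xy$ is the word of length $2k$, with $\tilde G_0=1$.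 Define $D_0=1$ and, for $n\ge1$, define $D_n$ recursively by $\sum_{i=0}^n D_i\star\tilde G_{n-i}=0$. Let $\overline x=1$ and $\overline y=-1$. A word $v_1\cdots v_m$ is Catalan if $\overline v_1+\cdots+\overline v_i\ge0$ for $1\le i\le m-1$ and $\overline v_1+\cdots+\overline v_m=0$. For $n\in\mathbb N$, $$C_n=\sum v_1v_2\cdots v_{2n}\,[1]_q[1+\overline v_1]_q[1+\overline v_1+\overline v_2]_q\cdots[1+\overline v_1+\cdots+\overline v_{2n}]_q,$$ where the sum is over all Catalan words $v_1\cdots v_{2n}$ of length $2n$ (so $C_0=1$). *)

theory Defs
  imports Main
begin

datatype letter = X | Y

text \<open>Elements of V are represented by their coefficient functions on words.
  The genuine algebra V consists of the finitely supported ones; all operations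
  below are the (bi)linear extensions of the operations on words.\<close>
type_synonym 'a vec = "letter list \<Rightarrow> 'a"

definition wd :: "letter list \<Rightarrow> 'a::field vec" where
  "wd u = (\<lambda>w. if w = u then 1 else 0)"

definition lcat :: "letter \<Rightarrow> 'a::field vec \<Rightarrow> 'a vec" where
  "lcat c f = (\<lambda>w. case w of [] \<Rightarrow> 0 | d # w' \<Rightarrow> if d = c then f w' else 0)"

definition rcat :: "'a::field vec \<Rightarrow> letter \<Rightarrow> 'a vec" where
  "rcat f c = (\<lambda>w. if w \<noteq> [] \<and> last w = c then f (butlast w) else 0)"

definition smul :: "'a::field \<Rightarrow> 'a vec \<Rightarrow> 'a vec" where
  "smul a f = (\<lambda>w. a * f w)"

fun pair :: "letter \<Rightarrow> letter \<Rightarrow> int" where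
  "pair X X = 2" | "pair Y Y = 2" | "pair X Y = -2" | "pair Y X = -2"

fun qsh :: "'a::field \<Rightarrow> letter list \<Rightarrow> letter list \<Rightarrow> 'a vec" where
  "qsh q [] v = wd v"
| "qsh q (a # u) [] = wd (a # u)"
| "qsh q (a # u) (b # v) =
     (\<lambda>w. lcat a (qsh q u (b # v)) w
          + lcat b (qsh q (a # u) v) w * q powi (\<Sum>c\<leftarrow>a # u. pair c b))"

text \<open>Bilinear extension of the q-shuffle product. Since the q-shuffle of u and v
  is homogeneous of degree length u + length v, only words of length at most
  length w contribute to the coefficient of w.\<close>
definition star :: "'a::field \<Rightarrow> 'a vec \<Rightarrow> 'a vec \<Rightarrow> 'a vec" where
  "star q f g = (\<lambda>w. \<Sum>u\<in>{u. length u \<le> length w}. \<Sum>v\<in>{v. length v \<le> length w}.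
                      f u * g v * qsh q u v w)"

fun alt :: "letter \<Rightarrow> nat \<Rightarrow> letter list" where
  "alt c 0 = []"
| "alt X (Suc n) = X # alt Y n"
| "alt Y (Suc n) = Y # alt X n"

text \<open>W_{-k}, W_{k+1}, tilde G_k.\<close>
definition Wneg :: "nat \<Rightarrow> 'a::field vec" where "Wneg k = wd (alt X (2 * k + 1))"
definition Wpos :: "nat \<Rightarrow> 'a::field vec" where "Wpos k = wd (alt Y (2 * k + 1))"
definition Gt :: "nat \<Rightarrow> 'a::field vec" where "Gt k = wd (alt X (2 * k))"

definition qint :: "'a::field \<Rightarrow> int \<Rightarrow> 'a" where
  "qint q m = (q powi m - q powi (- m)) / (q - inverse q)"

fun bar :: "letter \<Rightarrow> int" where "bar X = 1" | "bar Y = -1"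

definition catalan :: "letter list \<Rightarrow> bool" where
  "catalan v \<longleftrightarrow> (\<forall>i. 1 \<le> i \<and> i \<le> length v - 1 \<longrightarrow> (\<Sum>j<i. bar (v ! j)) \<ge> 0)
                 \<and> (\<Sum>j<length v. bar (v ! j)) = 0"

definition Cn :: "'a::field \<Rightarrow> nat \<Rightarrow> 'a vec" where
  "Cn q n = (\<lambda>w. if catalan w \<and> length w = 2 * n
                 then (\<Prod>i\<le>2 * n. qint q (1 + (\<Sum>j<i. bar (w ! j)))) else 0)"

end

theory Submission
  imports Defs
begin

lemma letter_cases: "c = X \<or> c = Y"
  by (cases c) auto

lemma letter_UNIV: "(UNIV :: letter set) = {X, Y}"
  using letter_cases by auto

lemma finite_letter: "finite (UNIV :: letter set)"
  by (simp add: letter_UNIV)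

definition LL :: "nat \<Rightarrow> letter list set" where "LL n = {u. length u \<le> n}"

lemma finite_LL: "finite (LL n)"
proof -
  have "LL n = {xs. set xs \<subseteq> UNIV \<and> length xs \<le> n}" by (auto simp: LL_def)
  then show ?thesis using finite_lists_length_le[OF finite_letter, of n] by simp
qed

definition wt :: "letter \<Rightarrow> letter list \<Rightarrow> int" where
  "wt a u = (\<Sum>c\<leftarrow>u. pair c a)"

lemma wt_Nil[simp]: "wt a [] = 0" by (simp add: wt_def)
lemma wt_Cons[simp]: "wt a (c # u) = pair c a + wt a u" by (simp add: wt_def)
lemma wt_append[simp]: "wt a (u @ v) = wt a u + wt a v" by (simp add: wt_def)

lemma pair_sym: "pair a b = pair b a"
  by (cases a; cases b) auto

lemma qsh_u_Nil: "qsh q u [] = wd u"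
  by (cases u) auto

lemma qsh_at_Nil: "qsh q u v [] = (if u = [] \<and> v = [] then 1 else 0)"
  by (cases u; cases v) (auto simp: wd_def lcat_def)

lemma qsh_at_Cons:
  "qsh q u v (a # w) =
     (case u of [] \<Rightarrow> 0 | b # u' \<Rightarrow> if b = a then qsh q u' v w else 0)
   + (case v of [] \<Rightarrow> 0 | b # v' \<Rightarrow> if b = a then q powi (wt a u) * qsh q u v' w else 0)"
proof (cases u)
  case Nil
  then show ?thesis by (cases v) (auto simp: wd_def)
next
  case (Cons b u')
  show ?thesis
  proof (cases v)
    case Nil
    then show ?thesis using Cons by (auto simp: wd_def qsh_u_Nil)
  next
    case (Cons c v')
    then show ?thesis using \<open>u = b # u'\<close> by (auto simp: lcat_def wt_def)
  qed
qed

lemma qsh_add: "qsh q u v w \<noteq> 0 \<Longrightarrow>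
  (\<Sum>c\<leftarrow>w. (F c :: int)) = (\<Sum>c\<leftarrow>u. F c) + (\<Sum>c\<leftarrow>v. F c)"
proof (induction w arbitrary: u v)
  case Nil
  then show ?case by (auto simp: qsh_at_Nil split: if_splits)
next
  case (Cons a w)
  show ?case
  proof (cases "(case u of [] \<Rightarrow> 0 | b # u' \<Rightarrow> if b = a then qsh q u' v w else 0) \<noteq> 0")
    case True
    then obtain u' where "u = a # u'" "qsh q u' v w \<noteq> 0"
      by (cases u) (auto split: if_splits)
    then show ?thesis using Cons.IH by auto
  next
    case False
    then have "(case v of [] \<Rightarrow> 0 | b # v' \<Rightarrow> if b = a then q powi (wt a u) * qsh q u v' w else 0) \<noteq> 0"
      using Cons.prems by (simp add: qsh_at_Cons)
    then obtain v' where "v = a # v'" "qsh q u v' w \<noteq> 0"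
      by (cases v) (auto split: if_splits)
    then show ?thesis using Cons.IH by auto
  qed
qed

lemma qsh_len: "qsh q u v w \<noteq> 0 \<Longrightarrow> length w = length u + length v"
  using qsh_add[of q u v w "\<lambda>_. 1"] by (simp add: sum_list_triv)

section \<open>Star\<close>

lemma star_LL: "star q f g w = (\<Sum>u\<in>LL (length w). \<Sum>v\<in>LL (length w). f u * g v * qsh q u v w)"
  by (simp add: star_def LL_def)

lemma star_eq:
  assumes "length w \<le> N1" "length w \<le> N2"
  shows "star q f g w = (\<Sum>u\<in>LL N1. \<Sum>v\<in>LL N2. f u * g v * qsh q u v w)"
proof -
  have z: "f u * g v * qsh q u v w = 0" if "length u > length w \<or> length v > length w" for u v
    using qsh_len[of q u v w] that by auto
  have "(\<Sum>u\<in>LL N1. \<Sum>v\<in>LL N2. f u * g v * qsh q u v w)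
      = (\<Sum>u\<in>LL N1. \<Sum>v\<in>LL (length w). f u * g v * qsh q u v w)"
  proof (rule sum.cong[OF refl])
    fix u assume "u \<in> LL N1"
    show "(\<Sum>v\<in>LL N2. f u * g v * qsh q u v w) = (\<Sum>v\<in>LL (length w). f u * g v * qsh q u v w)"
      by (rule sum.mono_neutral_right[OF finite_LL]) (use assms z in \<open>auto simp: LL_def\<close>)
  qed
  also have "\<dots> = (\<Sum>u\<in>LL (length w). \<Sum>v\<in>LL (length w). f u * g v * qsh q u v w)"
    by (rule sum.mono_neutral_right[OF finite_LL]) (use assms in \<open>auto simp: LL_def not_le intro!: sum.neutral z\<close>)
  finally show ?thesis by (simp add: star_LL)
qed

definition dl :: "letter \<Rightarrow> 'a vec \<Rightarrow> 'a vec" where "dl a f = (\<lambda>u. f (a # u))"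
definition tw :: "'a::field \<Rightarrow> letter \<Rightarrow> 'a vec \<Rightarrow> 'a vec" where
  "tw q a f = (\<lambda>u. q powi (wt a u) * f u)"

lemma star_Nil: "star q f g [] = f [] * g []"
  by (simp add: star_def qsh_at_Nil wd_def)

lemma sum_LL_Suc_case:
  "(\<Sum>u\<in>LL (Suc n). (case u of [] \<Rightarrow> 0 | b # u' \<Rightarrow> if b = a then F u' else 0))
   = (\<Sum>u'\<in>LL n. (F u' :: 'a::comm_monoid_add))"
proof -
  have "(\<Sum>u\<in>LL (Suc n). (case u of [] \<Rightarrow> 0 | b # u' \<Rightarrow> if b = a then F u' else 0))
      = (\<Sum>u\<in>(Cons a) ` LL n. (case u of [] \<Rightarrow> 0 | b # u' \<Rightarrow> if b = a then F u' else 0))"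
    by (rule sum.mono_neutral_right[OF finite_LL]) (auto simp: LL_def split: list.splits)
  also have "\<dots> = (\<Sum>u'\<in>LL n. F u')"
    by (subst sum.reindex) (auto simp: inj_on_def)
  finally show ?thesis .
qed

lemma star_Cons: "star q f g (a # w) = star q (dl a f) g w + star q (tw q a f) (dl a g) w"
proof -
  let ?n = "length w"
  have "star q f g (a # w) = (\<Sum>u\<in>LL (Suc ?n). \<Sum>v\<in>LL (Suc ?n). f u * g v * qsh q u v (a # w))"
    by (simp add: star_LL)
  also have "\<dots> = (\<Sum>u\<in>LL (Suc ?n). \<Sum>v\<in>LL (Suc ?n).
        (case u of [] \<Rightarrow> 0 | b # u' \<Rightarrow> if b = a then f (a # u') * g v * qsh q u' v w else 0))
      + (\<Sum>u\<in>LL (Suc ?n). \<Sum>v\<in>LL (Suc ?n).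
        (case v of [] \<Rightarrow> 0 | b # v' \<Rightarrow> if b = a then f u * g (a # v') * (q powi (wt a u) * qsh q u v' w) else 0))"
    unfolding sum.distrib[symmetric]
    by (intro sum.cong refl) (auto simp: qsh_at_Cons algebra_simps split: list.splits)
  also have "(\<Sum>u\<in>LL (Suc ?n). \<Sum>v\<in>LL (Suc ?n).
        (case u of [] \<Rightarrow> 0 | b # u' \<Rightarrow> if b = a then f (a # u') * g v * qsh q u' v w else 0))
     = (\<Sum>u\<in>LL (Suc ?n).
        (case u of [] \<Rightarrow> 0 | b # u' \<Rightarrow> if b = a then (\<Sum>v\<in>LL (Suc ?n). f (a # u') * g v * qsh q u' v w) else 0))"
    by (intro sum.cong refl) (auto split: list.splits)
  also have "\<dots> = (\<Sum>u'\<in>LL ?n. \<Sum>v\<in>LL (Suc ?n). f (a # u') * g v * qsh q u' v w)"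
    by (rule sum_LL_Suc_case)
  also have "\<dots> = star q (dl a f) g w"
    by (subst star_eq[of w ?n "Suc ?n"]) (auto simp: dl_def)
  also have "(\<Sum>u\<in>LL (Suc ?n). \<Sum>v\<in>LL (Suc ?n).
        (case v of [] \<Rightarrow> 0 | b # v' \<Rightarrow> if b = a then f u * g (a # v') * (q powi (wt a u) * qsh q u v' w) else 0))
      = (\<Sum>u\<in>LL (Suc ?n). \<Sum>v'\<in>LL ?n. f u * g (a # v') * (q powi (wt a u) * qsh q u v' w))"
    by (intro sum.cong refl sum_LL_Suc_case)
  also have "\<dots> = star q (tw q a f) (dl a g) w"
    by (subst star_eq[of w "Suc ?n" ?n]) (auto simp: dl_def tw_def algebra_simps)
  finally show ?thesis .
qed


lemma star_zero_left[simp]: "star q (\<lambda>_. 0) g = (\<lambda>_. 0)"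
  by (simp add: star_def fun_eq_iff)
lemma star_zero_right[simp]: "star q f (\<lambda>_. 0) = (\<lambda>_. 0)"
  by (simp add: star_def fun_eq_iff)

lemma star_smul_left: "star q (\<lambda>u. c * f u) g w = c * star q f g w"
  by (simp add: star_def sum_distrib_left algebra_simps)
lemma star_smul_right: "star q f (\<lambda>u. c * g u) w = c * star q f g w"
  by (simp add: star_def sum_distrib_left algebra_simps)
lemma star_add_left: "star q (\<lambda>u. f u + f' u) g w = star q f g w + star q f' g w"
  by (simp add: star_def sum.distrib algebra_simps)
lemma star_add_right: "star q f (\<lambda>u. g u + g' u) w = star q f g w + star q f g' w"
  by (simp add: star_def sum.distrib algebra_simps)
lemma star_diff_left: "star q (\<lambda>u. f u - f' u) g w = star q f g w - star q f' g w"
  by (simp add: star_def sum_subtractf algebra_simps)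
lemma star_diff_right: "star q f (\<lambda>u. g u - g' u) w = star q f g w - star q f g' w"
  by (simp add: star_def sum_subtractf algebra_simps)
lemma star_sum_right: "star q f (\<lambda>u. \<Sum>i\<in>I. g i u) w = (\<Sum>i\<in>I. star q f (g i) w)"
proof -
  have "star q f (\<lambda>u. \<Sum>i\<in>I. g i u) w =
     (\<Sum>u\<in>LL (length w). \<Sum>v\<in>LL (length w). \<Sum>i\<in>I. f u * g i v * qsh q u v w)"
    by (simp add: star_LL sum_distrib_left sum_distrib_right algebra_simps)
  also have "\<dots> = (\<Sum>u\<in>LL (length w). \<Sum>i\<in>I. \<Sum>v\<in>LL (length w). f u * g i v * qsh q u v w)"
    by (intro sum.cong refl) (rule sum.swap)
  also have "\<dots> = (\<Sum>i\<in>I. \<Sum>u\<in>LL (length w). \<Sum>v\<in>LL (length w). f u * g i v * qsh q u v w)"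
    by (rule sum.swap)
  finally show ?thesis by (simp add: star_LL)
qed
lemma star_sum_left: "star q (\<lambda>u. \<Sum>i\<in>I. f i u) g w = (\<Sum>i\<in>I. star q (f i) g w)"
proof -
  have "star q (\<lambda>u. \<Sum>i\<in>I. f i u) g w =
     (\<Sum>u\<in>LL (length w). \<Sum>v\<in>LL (length w). \<Sum>i\<in>I. f i u * g v * qsh q u v w)"
    by (simp add: star_LL sum_distrib_left sum_distrib_right algebra_simps)
  also have "\<dots> = (\<Sum>u\<in>LL (length w). \<Sum>i\<in>I. \<Sum>v\<in>LL (length w). f i u * g v * qsh q u v w)"
    by (intro sum.cong refl) (rule sum.swap)
  also have "\<dots> = (\<Sum>i\<in>I. \<Sum>u\<in>LL (length w). \<Sum>v\<in>LL (length w). f i u * g v * qsh q u v w)"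
    by (rule sum.swap)
  finally show ?thesis by (simp add: star_LL)
qed

lemma star_wd_Nil_left: "star q (wd []) g = g"
proof
  fix w show "star q (wd []) g w = g w"
  proof (induction w arbitrary: g)
    case Nil then show ?case by (simp add: star_Nil wd_def)
  next
    case (Cons a w)
    have "dl a (wd [] :: 'a::field vec) = (\<lambda>_. 0)" by (simp add: dl_def wd_def fun_eq_iff)
    moreover have "tw q a (wd [] :: 'a::field vec) = wd []" by (simp add: tw_def wd_def fun_eq_iff)
    ultimately have "star q (wd []) g (a # w) = star q (wd []) (dl a g) w"
      by (simp add: star_Cons)
    then show ?case by (simp add: Cons.IH dl_def)
  qed
qed

lemma star_wd_Nil_right: "star q f (wd []) = f"
proof
  fix w show "star q f (wd []) w = f w"
  proof (induction w arbitrary: f)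
    case Nil then show ?case by (simp add: star_Nil wd_def)
  next
    case (Cons a w)
    have "dl a (wd [] :: 'a::field vec) = (\<lambda>_. 0)" by (simp add: dl_def wd_def fun_eq_iff)
    then have "star q f (wd []) (a # w) = star q (dl a f) (wd []) w"
      by (simp add: star_Cons)
    then show ?case by (simp add: Cons.IH dl_def)
  qed
qed

lemma wt_qsh: "qsh q u v w \<noteq> 0 \<Longrightarrow> wt a w = wt a u + wt a v"
  using qsh_add[of q u v w "\<lambda>c. pair c a"] by (simp add: wt_def)

lemma tw_star:
  assumes "q \<noteq> 0"
  shows "tw q a (star q f g) = star q (tw q a f) (tw q a g)"
proof
  fix w
  have "tw q a (star q f g) w = (\<Sum>u\<in>LL (length w). \<Sum>v\<in>LL (length w). q powi (wt a w) * (f u * g v * qsh q u v w))"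
    by (simp add: tw_def star_LL sum_distrib_left)
  also have "\<dots> = (\<Sum>u\<in>LL (length w). \<Sum>v\<in>LL (length w). (q powi (wt a u) * f u) * (q powi (wt a v) * g v) * qsh q u v w)"
  proof (intro sum.cong refl)
    fix u v
    show "q powi (wt a w) * (f u * g v * qsh q u v w) = (q powi (wt a u) * f u) * (q powi (wt a v) * g v) * qsh q u v w"
    proof (cases "qsh q u v w = 0")
      case False
      then have "wt a w = wt a u + wt a v" by (rule wt_qsh)
      then show ?thesis using assms by (simp add: power_int_add algebra_simps)
    qed simp
  qed
  also have "\<dots> = star q (tw q a f) (tw q a g) w" by (simp add: star_LL tw_def)
  finally show "tw q a (star q f g) w = star q (tw q a f) (tw q a g) w" .
qed

lemma dl_star: "dl a (star q f g) = (\<lambda>w. star q (dl a f) g w + star q (tw q a f) (dl a g) w)"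
  by (simp add: dl_def star_Cons fun_eq_iff)

lemma star_assoc:
  assumes "q \<noteq> 0"
  shows "star q (star q f g) h = star q f (star q g h)"
proof
  fix w show "star q (star q f g) h w = star q f (star q g h) w"
  proof (induction w arbitrary: f g h)
    case Nil then show ?case by (simp add: star_Nil)
  next
    case (Cons a w)
    have "star q (star q f g) h (a # w) =
      star q (star q (dl a f) g) h w + star q (star q (tw q a f) (dl a g)) h w
      + star q (star q (tw q a f) (tw q a g)) (dl a h) w"
      by (simp add: star_Cons dl_star tw_star[OF assms] star_add_left)
    also have "\<dots> = star q (dl a f) (star q g h) w + star q (tw q a f) (star q (dl a g) h) w
      + star q (tw q a f) (star q (tw q a g) (dl a h)) w"
      by (simp add: Cons.IH)
    also have "\<dots> = star q f (star q g h) (a # w)"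
      by (simp add: star_Cons dl_star star_add_right)
    finally show ?case .
  qed
qed


definition dr :: "letter \<Rightarrow> 'a vec \<Rightarrow> 'a vec" where "dr a f = (\<lambda>u. f (u @ [a]))"

lemma star_snoc:
  assumes "q \<noteq> 0"
  shows "star q f g (w @ [a]) = star q f (dr a g) w + star q (dr a f) (tw q a g) w"
proof (induction w arbitrary: f g)
  case Nil
  show ?case by (simp add: star_Cons star_Nil dl_def dr_def tw_def)
next
  case (Cons b w)
  have e1: "dr a (tw q b f) = (\<lambda>u. q powi (pair a b) * tw q b (dr a f) u)"
    using assms by (simp add: dr_def tw_def fun_eq_iff power_int_add algebra_simps)
  have e2: "dl b (tw q a g) = (\<lambda>u. q powi (pair a b) * tw q a (dl b g) u)"
    using assms by (simp add: dl_def tw_def fun_eq_iff power_int_add algebra_simps pair_sym)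
  have e3: "dr a (dl b h) = dl b (dr a h)" for h :: "'a vec"
    by (simp add: dr_def dl_def)
  have "star q f g ((b # w) @ [a]) = star q (dl b f) g (w @ [a]) + star q (tw q b f) (dl b g) (w @ [a])"
    by (simp add: star_Cons)
  also have "\<dots> = star q (dl b f) (dr a g) w + star q (dr a (dl b f)) (tw q a g) w
     + (star q (tw q b f) (dr a (dl b g)) w + star q (dr a (tw q b f)) (tw q a (dl b g)) w)"
    by (simp add: Cons.IH)
  also have "\<dots> = star q f (dr a g) (b # w) + star q (dr a f) (tw q a g) (b # w)"
    by (simp add: star_Cons e1 e2 e3 star_smul_left star_smul_right)
  finally show ?case .
qed

fun swp :: "letter \<Rightarrow> letter" where "swp X = Y" | "swp Y = X"

lemma swp_swp[simp]: "swp (swp c) = c" by (cases c) auto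
lemma pair_swp[simp]: "pair (swp a) (swp b) = pair a b" by (cases a; cases b) auto

definition sig :: "letter list \<Rightarrow> letter list" where "sig w = rev (map swp w)"
definition sg :: "'a vec \<Rightarrow> 'a vec" where "sg f = (\<lambda>u. f (sig u))"

lemma sig_Nil[simp]: "sig [] = []" by (simp add: sig_def)
lemma sig_Cons[simp]: "sig (a # w) = sig w @ [swp a]" by (simp add: sig_def)
lemma sig_sig[simp]: "sig (sig w) = w" by (simp add: sig_def rev_map comp_def)
lemma sig_append: "sig (u @ v) = sig v @ sig u" by (simp add: sig_def)
lemma length_sig[simp]: "length (sig w) = length w" by (simp add: sig_def)

lemma wt_sig: "wt (swp a) (sig u) = wt a u"
  by (induction u) (auto simp: sig_def wt_def)

lemma star_sig:
  assumes "q \<noteq> 0"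
  shows "star q f g (sig w) = star q (sg g) (sg f) w"
proof (induction w arbitrary: f g)
  case Nil
  then show ?case by (simp add: star_Nil sg_def)
next
  case (Cons a w)
  have e1: "sg (dr (swp a) h) = dl a (sg h)" for h :: "'a vec"
    by (simp add: sg_def dr_def dl_def)
  have e2: "sg (tw q (swp a) h) = tw q a (sg h)" for h :: "'a vec"
    by (simp add: sg_def tw_def fun_eq_iff wt_sig)
  have "star q f g (sig (a # w)) = star q f (dr (swp a) g) (sig w) + star q (dr (swp a) f) (tw q (swp a) g) (sig w)"
    by (simp add: star_snoc[OF assms])
  also have "\<dots> = star q (sg (dr (swp a) g)) (sg f) w + star q (sg (tw q (swp a) g)) (sg (dr (swp a) f)) w"
    by (simp add: Cons.IH)
  also have "\<dots> = star q (sg g) (sg f) (a # w)"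
    by (simp add: e1 e2 star_Cons)
  finally show ?case .
qed

section \<open>q-integers\<close>

lemma qden: assumes "q \<noteq> 0" "q^2 \<noteq> (1::'a::field)" shows "q - inverse q \<noteq> 0"
proof
  assume "q - inverse q = 0"
  then have "q * q = q * inverse q" by simp
  then have "q^2 = 1" using assms(1) by (simp add: power2_eq_square)
  then show False using assms(2) by simp
qed

lemma qint_0[simp]: "qint q 0 = 0" by (simp add: qint_def)

lemma qint_1: assumes "q \<noteq> 0" "q^2 \<noteq> (1::'a::field)" shows "qint q 1 = 1"
  using qden[OF assms] by (simp add: qint_def power_int_minus)

lemma qint_rec1: assumes "q \<noteq> 0" "q^2 \<noteq> (1::'a::field)"
  shows "qint q (h + 1) = q * qint q h + q powi (- h)"
proof -
  have d: "q - inverse q \<noteq> 0" by (rule qden[OF assms])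
  have a: "q powi h \<noteq> 0" using assms(1) by simp
  have e1: "q powi (h + 1) = q powi h * q" using assms(1) by (simp add: power_int_add)
  have e2: "q powi (- (h + 1)) = inverse (q powi h) * inverse q"
    unfolding power_int_minus e1 by simp
  have e3: "q powi (- h) = inverse (q powi h)" by (simp add: power_int_minus)
  show ?thesis unfolding qint_def e1 e2 e3 using d a assms(1)
    by (simp add: field_simps)
qed

lemma qint_rec2: assumes "q \<noteq> 0" "q^2 \<noteq> (1::'a::field)"
  shows "qint q (h + 1) = inverse q * qint q h + q powi h"
proof -
  have d: "q - inverse q \<noteq> 0" by (rule qden[OF assms])
  have a: "q powi h \<noteq> 0" using assms(1) by simp
  have e1: "q powi (h + 1) = q powi h * q" using assms(1) by (simp add: power_int_add)
  have e2: "q powi (- (h + 1)) = inverse (q powi h) * inverse q"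
    unfolding power_int_minus e1 by simp
  have e3: "q powi (- h) = inverse (q powi h)" by (simp add: power_int_minus)
  show ?thesis unfolding qint_def e1 e2 e3 using d a assms(1)
    by (simp add: field_simps)
qed

section \<open>Paths\<close>

definition ht :: "letter list \<Rightarrow> int" where "ht u = (\<Sum>c\<leftarrow>u. bar c)"
definition ny :: "letter list \<Rightarrow> nat" where "ny u = length (filter (\<lambda>c. c = Y) u)"

lemma ht_Nil[simp]: "ht [] = 0" by (simp add: ht_def)
lemma ht_Cons[simp]: "ht (c # u) = bar c + ht u" by (simp add: ht_def)
lemma ht_append[simp]: "ht (u @ v) = ht u + ht v" by (simp add: ht_def)
lemma ny_Nil[simp]: "ny [] = 0" by (simp add: ny_def)
lemma ny_Cons_X[simp]: "ny (X # u) = ny u" by (simp add: ny_def)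
lemma ny_Cons_Y[simp]: "ny (Y # u) = Suc (ny u)" by (simp add: ny_def)

lemma wt_X_ht: "wt X u = 2 * ht u"
  by (induction u) (auto simp: ht_def elim: pair.elims bar.elims, (case_tac a; simp)+)


lemma pair_swp_left: "pair (swp c) a = - pair c a"
  by (cases c; cases a) auto

lemma wt_Y_ht: "wt Y u = - 2 * ht u"
  by (induction u) (auto, (case_tac a; simp)+)

fun pE :: "'a::field \<Rightarrow> int \<Rightarrow> letter list \<Rightarrow> 'a" where
  "pE q h [] = 1"
| "pE q h (c # u) = qint q (h + bar c) * pE q (h + bar c) u"

fun pQ :: "'a::field \<Rightarrow> int \<Rightarrow> letter list \<Rightarrow> 'a" where
  "pQ q h [] = 1"
| "pQ q h (X # u) = qint q (h + 1) * pQ q (h + 1) u"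
| "pQ q h (Y # u) = qint q h * pQ q (h - 1) u"

definition Eh :: "'a::field \<Rightarrow> int \<Rightarrow> 'a vec" where
  "Eh q h u = (if h + ht u = 1 then pE q h u else 0)"
definition Qh :: "'a::field \<Rightarrow> int \<Rightarrow> 'a vec" where
  "Qh q h u = (if h + ht u = 0 then pQ q h u else 0)"

lemma pE_zero_neg: "h < 0 \<Longrightarrow> h + ht u > 0 \<Longrightarrow> pE q h u = 0"
proof (induction u arbitrary: h)
  case Nil then show ?case by simp
next
  case (Cons c u)
  show ?case
  proof (cases "h + bar c = 0")
    case True then show ?thesis by simp
  next
    case False
    then have "h + bar c < 0" using Cons.prems by (cases c) auto
    moreover have "(h + bar c) + ht u > 0" using Cons.prems by simp
    ultimately show ?thesis using Cons.IH by simp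
  qed
qed

lemma pE_zero_pos: "h > 0 \<Longrightarrow> i \<le> length u \<Longrightarrow> h + ht (take i u) \<le> 0 \<Longrightarrow> pE q h u = 0"
proof (induction u arbitrary: h i)
  case Nil then show ?case by simp
next
  case (Cons c u)
  show ?case
  proof (cases "h + bar c = 0")
    case True then show ?thesis by simp
  next
    case False
    then have hc: "h + bar c > 0" using Cons.prems by (cases c) auto
    obtain i' where i': "i = Suc i'" using Cons.prems by (cases i) auto
    then have "i' \<le> length u" "(h + bar c) + ht (take i' u) \<le> 0" using Cons.prems by auto
    then show ?thesis using Cons.IH[OF hc] by simp
  qed
qed

lemma Eh_neg1: "Eh q (-1) = (\<lambda>_. 0)"
  by (auto simp: Eh_def fun_eq_iff intro: pE_zero_neg)

lemma Eh_Nil: "Eh q h [] = (if h = 1 then 1 else 0)" by (simp add: Eh_def)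
lemma Qh_Nil: "Qh q h [] = (if h = 0 then 1 else 0)" by (simp add: Qh_def)
lemma Qh_X: "Qh q h (X # u) = qint q (h + 1) * Qh q (h + 1) u"
  by (simp add: Qh_def algebra_simps)
lemma Qh_Y: "Qh q h (Y # u) = qint q h * Qh q (h - 1) u"
  by (simp add: Qh_def algebra_simps)

lemma dl_Eh_X: "dl X (Eh q h) = (\<lambda>u. qint q (h + 1) * Eh q (h + 1) u)"
  by (simp add: dl_def Eh_def fun_eq_iff algebra_simps)
lemma dl_Eh_Y: "dl Y (Eh q h) = (\<lambda>u. qint q (h - 1) * Eh q (h - 1) u)"
  by (simp add: dl_def Eh_def fun_eq_iff algebra_simps)
lemma tw_Eh_X: "tw q X (Eh q h) = (\<lambda>u. q powi (2 - 2 * h) * Eh q h u)"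
proof
  fix u show "tw q X (Eh q h) u = q powi (2 - 2 * h) * Eh q h u"
  proof (cases "h + ht u = 1")
    case True
    then have "wt X u = 2 - 2 * h" by (simp add: wt_X_ht)
    then show ?thesis by (simp add: tw_def Eh_def)
  qed (simp add: tw_def Eh_def)
qed
lemma tw_Eh_Y: "tw q Y (Eh q h) = (\<lambda>u. q powi (2 * h - 2) * Eh q h u)"
proof
  fix u show "tw q Y (Eh q h) u = q powi (2 * h - 2) * Eh q h u"
  proof (cases "h + ht u = 1")
    case True
    then have "wt Y u = 2 * h - 2" by (simp add: wt_Y_ht)
    then show ?thesis by (simp add: tw_def Eh_def)
  qed (simp add: tw_def Eh_def)
qed

section \<open>Alternating words\<close>

lemma alt_Suc: "alt c (Suc n) = c # alt (swp c) n"
  by (cases c) auto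

lemma alt_len[simp]: "length (alt c n) = n"
  by (induction n arbitrary: c) (auto simp: alt_Suc)

lemma Cons_eq_alt: "(a # u = alt c (Suc (length u))) = (a = c \<and> u = alt (swp c) (length u))"
  by (simp add: alt_Suc)

lemma wt_alt: "wt a (alt c n) = (if even n then 0 else pair c a)"
  by (induction n arbitrary: c) (auto simp: alt_Suc pair_swp_left)

lemma ny_alt: "ny (alt c n) = (if c = X then n div 2 else (n + 1) div 2)"
proof (induction n arbitrary: c)
  case 0 then show ?case by (simp add: ny_def)
next
  case (Suc n)
  show ?case by (cases c) (auto simp: Suc.IH)
qed

definition AXs :: "'a::field \<Rightarrow> 'a vec" where
  "AXs m u = (if even (length u) \<and> u = alt X (length u) then m ^ ny u else 0)"
definition AYs :: "'a::field \<Rightarrow> 'a vec" where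
  "AYs m u = (if odd (length u) \<and> u = alt Y (length u) then m ^ ny u else 0)"
definition AltX :: "'a::field \<Rightarrow> 'a vec" where
  "AltX m u = (if odd (length u) \<and> u = alt X (length u) then m ^ ny u else 0)"
definition AltY :: "'a::field \<Rightarrow> 'a vec" where
  "AltY m u = (if even (length u) \<and> u = alt Y (length u) then m ^ ny u else 0)"

lemma AXs_Nil: "AXs m [] = 1" by (simp add: AXs_def)
lemma AYs_Nil: "AYs m [] = 0" by (simp add: AYs_def)
lemma AltX_Nil: "AltX m [] = 0" by (simp add: AltX_def)
lemma AltY_Nil: "AltY m [] = 1" by (simp add: AltY_def)

lemma AltX_X: "AltX m (X # u) = AltY m u"
  using Cons_eq_alt[of X u X] by (auto simp: AltX_def AltY_def)
lemma AltX_Y: "AltX m (Y # u) = 0"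
  using Cons_eq_alt[of Y u X] by (auto simp: AltX_def)
lemma AltY_X: "AltY m (X # u) = 0"
  using Cons_eq_alt[of X u Y] by (auto simp: AltY_def)
lemma AltY_Y: "AltY m (Y # u) = m * AltX m u"
  using Cons_eq_alt[of Y u Y] by (auto simp: AltX_def AltY_def)

lemma dl_AXs_X: "dl X (AXs m) = AYs m"
  using Cons_eq_alt[of X _ X] by (auto simp: dl_def AXs_def AYs_def fun_eq_iff)
lemma dl_AXs_Y: "dl Y (AXs m) = (\<lambda>_. 0)"
  using Cons_eq_alt[of Y _ X] by (auto simp: dl_def AXs_def fun_eq_iff)
lemma dl_AYs_X: "dl X (AYs m) = (\<lambda>_. 0)"
  using Cons_eq_alt[of X _ Y] by (auto simp: dl_def AYs_def fun_eq_iff)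
lemma dl_AYs_Y: "dl Y (AYs m) = (\<lambda>u. m * AXs m u)"
  using Cons_eq_alt[of Y _ Y] by (auto simp: dl_def AXs_def AYs_def fun_eq_iff)

lemma tw_AXs: "tw q a (AXs m) = AXs m"
proof
  fix u show "tw q a (AXs m) u = AXs m u"
    using wt_alt[of a X "length u"] by (auto simp: tw_def AXs_def)
qed
lemma tw_AYs_X: "tw q X (AYs m) = (\<lambda>u. q powi (-2) * AYs m u)"
proof
  fix u show "tw q X (AYs m) u = q powi (-2) * AYs m u"
    using wt_alt[of X Y "length u"] by (auto simp: tw_def AYs_def)
qed
lemma tw_AYs_Y: "tw q Y (AYs m) = (\<lambda>u. q powi 2 * AYs m u)"
proof
  fix u show "tw q Y (AYs m) u = q powi 2 * AYs m u"
    using wt_alt[of Y Y "length u"] by (auto simp: tw_def AYs_def)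
qed


lemma pw: "q \<noteq> 0 \<Longrightarrow> a = b + c \<Longrightarrow> (q::'a::field) powi a = q powi b * q powi c"
  by (simp add: power_int_add)

lemma sAX_X: "star q (AXs m) g (X # w) = star q (AYs m) g w + star q (AXs m) (dl X g) w"
  by (simp add: star_Cons dl_AXs_X tw_AXs)
lemma sAX_Y: "star q (AXs m) g (Y # w) = star q (AXs m) (dl Y g) w"
  by (simp add: star_Cons dl_AXs_Y tw_AXs)
lemma sAY_X: "star q (AYs m) g (X # w) = q powi (-2) * star q (AYs m) (dl X g) w"
  by (simp add: star_Cons dl_AYs_X tw_AYs_X star_smul_left)
lemma sAY_Y: "star q (AYs m) g (Y # w) = m * star q (AXs m) g w + q powi 2 * star q (AYs m) (dl Y g) w"
  by (simp add: star_Cons dl_AYs_Y tw_AYs_Y star_smul_left)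

lemma sE_X: "star q (Eh q h) g (X # w) = qint q (h + 1) * star q (Eh q (h + 1)) g w
   + q powi (2 - 2 * h) * star q (Eh q h) (dl X g) w"
  by (simp add: star_Cons dl_Eh_X tw_Eh_X star_smul_left)
lemma sE_Y: "star q (Eh q h) g (Y # w) = qint q (h - 1) * star q (Eh q (h - 1)) g w
   + q powi (2 * h - 2) * star q (Eh q h) (dl Y g) w"
  by (simp add: star_Cons dl_Eh_Y tw_Eh_Y star_smul_left)

lemma famF:
  fixes q :: "'a::field"
  assumes q0: "q \<noteq> 0" and q2: "q^2 \<noteq> 1"
  shows "h \<ge> 0 \<Longrightarrow>
    star q (AXs (-q)) (Eh q h) w = (if h = 0 then AltX (-q) w else 0)
       + (if h \<ge> 1 then q powi (int (ny w) - int (length w)) * Qh q (h - 1) w else 0)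
  \<and> star q (AYs (-q)) (Eh q h) w = (if h = 0 then AltY (-q) w else 0)
       - q powi (h + int (ny w) - int (length w)) * Qh q h w"
proof (induction w arbitrary: h)
  case Nil
  then show ?case
    by (simp add: star_Nil AXs_Nil AYs_Nil AltX_Nil AltY_Nil Eh_Nil Qh_Nil)
next
  case (Cons c w)
  note IH = Cons.IH
  have h0: "h \<ge> 0" by fact
  define l where "l = int (length w)"
  define n where "n = int (ny w)"
  define P where "P = q powi (n - l)"
  have q1: "qint q 1 = 1" by (rule qint_1[OF q0 q2])
  show ?case
  proof (cases c)
    case X
    have IHh: "star q (AYs (-q)) (Eh q h) w = (if h = 0 then AltY (-q) w else 0) - q powi h * P * Qh q h w"
      using IH[OF h0] q0 by (simp add: P_def l_def n_def pw[of q "h + int (ny w) - int (length w)" h])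
    have IHh1: "star q (AXs (-q)) (Eh q (h + 1)) w = P * Qh q h w"
      using IH[of "h + 1"] h0 by (simp add: P_def l_def n_def)
    have IHh1y: "star q (AYs (-q)) (Eh q (h + 1)) w = - (q powi (h + 1) * P * Qh q (h + 1) w)"
      using IH[of "h + 1"] h0 q0 by (simp add: P_def l_def n_def pw[of q "h + 1 + int (ny w) - int (length w)" "h + 1"])
    have e1: "q powi (int (ny (X # w)) - int (length (X # w))) = P * inverse q"
      using q0 by (simp add: P_def l_def n_def pw[of q _ "int (ny w) - int (length w)" "-1"] power_int_minus)
    have e2: "q powi (h + int (ny (X # w)) - int (length (X # w))) = q powi h * P * inverse q"
      using q0 by (simp add: P_def l_def n_def pw[of q _ "h" "int (ny w) - int (length w) - 1"]
          pw[of q "int (ny w) - int (length w) - 1" "int (ny w) - int (length w)" "-1"] power_int_minus)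
    have A: "star q (AXs (-q)) (Eh q h) (X # w) = (if h = 0 then AltX (-q) (X # w) else 0)
       + (if h \<ge> 1 then q powi (int (ny (X # w)) - int (length (X # w))) * Qh q (h - 1) (X # w) else 0)"
    proof -
      have "star q (AXs (-q)) (Eh q h) (X # w) = star q (AYs (-q)) (Eh q h) w + qint q (h + 1) * star q (AXs (-q)) (Eh q (h + 1)) w"
        by (simp add: sAX_X dl_Eh_X star_smul_right)
      also have "\<dots> = (if h = 0 then AltY (-q) w else 0) - q powi h * P * Qh q h w + (inverse q * qint q h + q powi h) * (P * Qh q h w)"
        by (simp add: IHh IHh1 qint_rec2[OF q0 q2])
      finally show ?thesis unfolding e1 using h0 by (cases "h = 0") (auto simp: AltX_X Qh_X algebra_simps)
    qed
    have B: "star q (AYs (-q)) (Eh q h) (X # w) = (if h = 0 then AltY (-q) (X # w) else 0)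
       - q powi (h + int (ny (X # w)) - int (length (X # w))) * Qh q h (X # w)"
    proof -
      have "star q (AYs (-q)) (Eh q h) (X # w) = q powi (-2) * (qint q (h + 1) * star q (AYs (-q)) (Eh q (h + 1)) w)"
        by (simp add: sAY_X dl_Eh_X star_smul_right)
      also have "\<dots> = q powi (-2) * (qint q (h + 1) * (- (q powi (h + 1) * P * Qh q (h + 1) w)))"
        by (simp add: IHh1y)
      also have "\<dots> = - (q powi h * P * inverse q * (qint q (h + 1) * Qh q (h + 1) w))"
      proof -
        have "q powi (-2) * q powi (h + 1) = q powi h * inverse q"
          using q0 by (simp add: power_int_add power_int_minus power2_eq_square field_simps)
        then show ?thesis by (simp add: algebra_simps)
      qed
      finally show ?thesis unfolding e2 by (simp add: AltY_X Qh_X)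
    qed
    show ?thesis using A B X by simp
  next
    case Y
    have e3: "q powi (int (ny (Y # w)) - int (length (Y # w))) = P"
      by (simp add: P_def n_def l_def)
    have e4: "q powi (h + int (ny (Y # w)) - int (length (Y # w))) = q powi h * P"
      using q0 by (simp add: P_def n_def l_def pw[of q _ h "int (ny w) - int (length w)"])
    have A: "star q (AXs (-q)) (Eh q h) (Y # w) = qint q (h - 1) * star q (AXs (-q)) (Eh q (h - 1)) w"
      by (simp add: sAX_Y dl_Eh_Y star_smul_right)
    have B: "star q (AYs (-q)) (Eh q h) (Y # w) = (- q) * star q (AXs (-q)) (Eh q h) w
       + q powi 2 * (qint q (h - 1) * star q (AYs (-q)) (Eh q (h - 1)) w)"
      by (simp add: sAY_Y dl_Eh_Y star_smul_right)
    consider "h = 0" | "h = 1" | "h \<ge> 2" using h0 by linarith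
    then show ?thesis
    proof cases
      case 1
      have "star q (AXs (-q)) (Eh q 0) w = AltX (-q) w" using IH[of 0] by simp
      then show ?thesis using 1 Y A B by (simp add: Eh_neg1 AltX_Y AltY_Y Qh_Y)
    next
      case 2
      have "star q (AXs (-q)) (Eh q 1) w = P * Qh q 0 w" using IH[of 1] by (simp add: P_def n_def l_def)
      moreover have "q powi (1 + (int (ny w) - int (length w))) = q * P"
        using q0 by (simp add: P_def n_def l_def power_int_add)
      ultimately show ?thesis using 2 Y A B q1 unfolding e3 e4 by (simp add: Qh_Y)
    next
      case 3
      have i1: "star q (AXs (-q)) (Eh q (h - 1)) w = P * Qh q (h - 2) w"
        using IH[of "h - 1"] 3 by (simp add: P_def n_def l_def)
      have i2: "star q (AXs (-q)) (Eh q h) w = P * Qh q (h - 1) w"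
        using IH[of h] 3 by (simp add: P_def n_def l_def)
      have i3: "star q (AYs (-q)) (Eh q (h - 1)) w = - (q powi h * inverse q * P * Qh q (h - 1) w)"
        using IH[of "h - 1"] 3 q0
        by (simp add: P_def n_def l_def pw[of q "h - 1 + int (ny w) - int (length w)" h "int (ny w) - int (length w) - 1"]
            pw[of q "int (ny w) - int (length w) - 1" "int (ny w) - int (length w)" "-1"] power_int_minus)
      have r: "qint q h = q * qint q (h - 1) + q powi (- (h - 1))"
        using qint_rec1[OF q0 q2, of "h - 1"] by simp
      have r2: "q powi h * q powi (- (h - 1)) = q"
        using q0 by (simp add: power_int_add[symmetric])
      have Aeq: "star q (AXs (-q)) (Eh q h) (Y # w) = q powi (int (ny (Y # w)) - int (length (Y # w))) * Qh q (h - 1) (Y # w)"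
        unfolding e3 A i1 using 3 by (simp add: Qh_Y algebra_simps)
      have Beq: "star q (AYs (-q)) (Eh q h) (Y # w) = - (q powi (h + int (ny (Y # w)) - int (length (Y # w))) * Qh q h (Y # w))"
      proof -
        have "star q (AYs (-q)) (Eh q h) (Y # w) = - (q * P * Qh q (h - 1) w)
            - q powi 2 * qint q (h - 1) * (q powi h * inverse q * P * Qh q (h - 1) w)"
          unfolding B i2 i3 by (simp add: algebra_simps)
        also have "\<dots> = - (q powi h * P * (qint q h * Qh q (h - 1) w))"
        proof -
          have r3: "q powi h * (q powi (1 - h) * Z) = q * Z" for Z
            using r2 by (simp add: mult.assoc[symmetric])
          have r4: "q * (inverse q * Z) = Z" for Z
            using q0 by (simp add: mult.assoc[symmetric])
          show ?thesis unfolding r using q0 by (simp add: algebra_simps power2_eq_square r3 r4)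
        qed
        finally show ?thesis unfolding e4 by (simp add: Qh_Y)
      qed
      show ?thesis using Aeq Beq 3 Y by (simp add: AltX_Y AltY_Y)
    qed
  qed
qed


lemma famG:
  fixes q :: "'a::field"
  assumes q0: "q \<noteq> 0" and q2: "q^2 \<noteq> 1"
  shows "h \<ge> 0 \<Longrightarrow>
    star q (Eh q h) (AXs (- inverse q)) w = (if h = 0 then AltX (- inverse q) w else 0)
       + (if h \<ge> 1 then q powi (int (length w) - int (ny w)) * Qh q (h - 1) w else 0)
  \<and> star q (Eh q h) (AYs (- inverse q)) w = (if h = 0 then q powi (-2) * AltY (- inverse q) w else 0)
       - q powi (int (length w) + h - 2 - int (ny w)) * Qh q h w"
proof (induction w arbitrary: h)
  case Nil
  then show ?case
    by (simp add: star_Nil AXs_Nil AYs_Nil AltX_Nil AltY_Nil Eh_Nil Qh_Nil)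
next
  case (Cons c w)
  note IH = Cons.IH
  have h0: "h \<ge> 0" by fact
  define R where "R = q powi (int (length w) - int (ny w))"
  define m where "m = - inverse q"
  have q1: "qint q 1 = 1" by (rule qint_1[OF q0 q2])
  have iq: "q * (inverse q * Z) = Z" for Z using q0 by (simp add: mult.assoc[symmetric])
  have pR: "q powi (int (length w) + k - int (ny w)) = q powi k * R" for k
    using q0 by (simp add: R_def pw[of q _ k "int (length w) - int (ny w)"])
  have IHX: "star q (Eh q k) (AXs m) w = (if k = 0 then AltX m w else 0) + (if k \<ge> 1 then R * Qh q (k - 1) w else 0)"
    if "k \<ge> 0" for k using IH[OF that] by (simp add: R_def m_def)
  have IHY: "star q (Eh q k) (AYs m) w = (if k = 0 then q powi (-2) * AltY m w else 0) - q powi (k - 2) * R * Qh q k w"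
    if "k \<ge> 0" for k using IH[OF that] pR[of "k - 2"] by (simp add: m_def algebra_simps)
  show ?case
  proof (cases c)
    case X
    have sX: "star q (Eh q h) (AXs m) (X # w) = qint q (h + 1) * star q (Eh q (h + 1)) (AXs m) w
        + q powi (2 - 2 * h) * star q (Eh q h) (AYs m) w"
      by (simp add: sE_X dl_AXs_X)
    have sY: "star q (Eh q h) (AYs m) (X # w) = qint q (h + 1) * star q (Eh q (h + 1)) (AYs m) w"
      by (simp add: sE_X dl_AYs_X)
    have eA: "q powi (int (length (X # w)) - int (ny (X # w))) = q * R"
      using q0 by (simp add: R_def pw[of q _ 1 "int (length w) - int (ny w)"])
    have eB: "q powi (int (length (X # w)) + h - 2 - int (ny (X # w))) = q powi (h - 1) * R"
      using pR[of "h - 1"] by (simp add: algebra_simps)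
    have A: "star q (Eh q h) (AXs m) (X # w) = (if h = 0 then AltX m (X # w) else 0)
       + (if h \<ge> 1 then q powi (int (length (X # w)) - int (ny (X # w))) * Qh q (h - 1) (X # w) else 0)"
    proof (cases "h = 0")
      case True
      have S: "star q (Eh q 0) (AYs m) w = inverse q * (inverse q * (AltY m w - R * Qh q 0 w))"
        using IHY[of 0] by (simp add: power_int_minus power2_eq_square algebra_simps)
      show ?thesis unfolding sX using True IHX[of 1] q1
        by (simp add: AltX_X S iq power2_eq_square mult.assoc)
    next
      case False
      then have hp: "h \<ge> 1" using h0 by simp
      have p1: "q powi (2 - 2 * h) * q powi (h - 2) = q powi (- h)"
        using q0 by (simp add: power_int_add[symmetric])
      have "star q (Eh q h) (AXs m) (X # w) = (qint q (h + 1) - q powi (2 - 2 * h) * q powi (h - 2)) * (R * Qh q h w)"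
        unfolding sX using hp IHX[of "h + 1"] IHY[of h] by (simp add: algebra_simps)
      also have "\<dots> = q * R * (qint q h * Qh q h w)"
        unfolding p1 qint_rec1[OF q0 q2] by (simp add: algebra_simps)
      finally show ?thesis unfolding eA using hp by (simp add: Qh_X)
    qed
    have B: "star q (Eh q h) (AYs m) (X # w) = (if h = 0 then q powi (-2) * AltY m (X # w) else 0)
       - q powi (int (length (X # w)) + h - 2 - int (ny (X # w))) * Qh q h (X # w)"
    proof -
      have "star q (Eh q h) (AYs m) (X # w) = - (q powi (h - 1) * R * (qint q (h + 1) * Qh q (h + 1) w))"
        unfolding sY using h0 IHY[of "h + 1"] by (simp add: algebra_simps)
      then show ?thesis unfolding eB by (simp add: AltY_X Qh_X)
    qed
    show ?thesis using A B X by (simp add: m_def)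
  next
    case Y
    have sX: "star q (Eh q h) (AXs m) (Y # w) = qint q (h - 1) * star q (Eh q (h - 1)) (AXs m) w"
      by (simp add: sE_Y dl_AXs_Y)
    have sY: "star q (Eh q h) (AYs m) (Y # w) = qint q (h - 1) * star q (Eh q (h - 1)) (AYs m) w
        + q powi (2 * h - 2) * (m * star q (Eh q h) (AXs m) w)"
      by (simp add: sE_Y dl_AYs_Y star_smul_right)
    have eA: "q powi (int (length (Y # w)) - int (ny (Y # w))) = R"
      by (simp add: R_def)
    have eB: "q powi (int (length (Y # w)) + h - 2 - int (ny (Y # w))) = q powi (h - 2) * R"
      using pR[of "h - 2"] by (simp add: algebra_simps)
    consider "h = 0" | "h = 1" | "h \<ge> 2" using h0 by linarith
    then show ?thesis
    proof cases
      case 1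
      then show ?thesis unfolding Y m_def[symmetric] sX sY using IHX[of 0]
        by (simp add: Eh_neg1 AltX_Y AltY_Y Qh_Y m_def)
    next
      case 2
      have "q powi (-1) = inverse q" by (simp add: power_int_minus)
      then show ?thesis unfolding Y m_def[symmetric] sX sY eA eB using 2 IHX[of 1] q1
        by (simp add: Qh_Y m_def)
    next
      case 3
      have A: "star q (Eh q h) (AXs m) (Y # w) = R * Qh q (h - 1) (Y # w)"
        unfolding sX using 3 IHX[of "h - 1"] by (simp add: Qh_Y algebra_simps)
      have p1: "q powi (2 * h - 2) * inverse q = q powi (h - 2) * q powi (h - 1)"
      proof -
        have a: "q powi (2 * h - 2) = q powi (2 * h - 3) * q" using q0 pw[of q "2 * h - 2" "2 * h - 3" 1] by simp
        have b: "q powi (h - 2) * q powi (h - 1) = q powi (2 * h - 3)" using q0 pw[of q "2 * h - 3" "h - 2" "h - 1"] by simp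
        show ?thesis unfolding a b using q0 by simp
      qed
      have p2: "q powi (h - 3) = q powi (h - 2) * inverse q"
        using q0 by (simp add: pw[of q "h - 3" "h - 2" "-1"] power_int_minus)
      have r: "qint q h = inverse q * qint q (h - 1) + q powi (h - 1)"
        using qint_rec2[OF q0 q2, of "h - 1"] by simp
      have B: "star q (Eh q h) (AYs m) (Y # w) = - (q powi (h - 2) * R * (qint q h * Qh q (h - 1) w))"
      proof -
        have "star q (Eh q h) (AYs m) (Y # w) = - (qint q (h - 1) * q powi (h - 3) * R * Qh q (h - 1) w)
            - q powi (2 * h - 2) * inverse q * R * Qh q (h - 1) w"
          unfolding sY using 3 IHX[of h] IHY[of "h - 1"] by (simp add: m_def algebra_simps)
        also have "\<dots> = - (q powi (h - 2) * R * (qint q h * Qh q (h - 1) w))"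
          unfolding p1 p2 r by (simp add: algebra_simps)
        finally show ?thesis .
      qed
      show ?thesis unfolding Y m_def[symmetric] eA eB using A B 3 by (simp add: AltX_Y AltY_Y Qh_Y)
    qed
  qed
qed

section \<open>Catalan link\<close>

lemma sum_bar_take: "i \<le> length u \<Longrightarrow> (\<Sum>j<i. bar (u ! j)) = ht (take i u)"
proof (induction i)
  case 0 then show ?case by simp
next
  case (Suc i)
  then have "i < length u" by simp
  then show ?case using Suc by (simp add: take_Suc_conv_app_nth)
qed

lemma prod_ht: "(\<Prod>i\<le>length u. qint q (h + ht (take i u))) = qint q h * pE q h u"
proof (induction u arbitrary: h)
  case Nil then show ?case by simp
next
  case (Cons c u)
  have "(\<Prod>i\<le>length (c # u). qint q (h + ht (take i (c # u))))
      = qint q h * (\<Prod>i\<le>length u. qint q ((h + bar c) + ht (take i u)))"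
    by (simp add: prod.atMost_Suc_shift algebra_simps del: prod.atMost_Suc)
  also have "\<dots> = qint q h * pE q h (c # u)" using Cons.IH by simp
  finally show ?case .
qed

lemma ht_len_ny: "ht u = int (length u) - 2 * int (ny u)"
  by (induction u) (auto, (case_tac a; simp)+)

lemma Cn_link:
  assumes q0: "q \<noteq> 0" and q2: "q^2 \<noteq> (1::'a::field)"
  shows "Cn q n u = (if length u = 2 * n \<and> ht u = 0 then pE q 1 u else 0)"
proof -
  have q1: "qint q 1 = 1" by (rule qint_1[OF q0 q2])
  have P: "(\<Prod>i\<le>2 * n. qint q (1 + (\<Sum>j<i. bar (u ! j)))) = pE q 1 u" if "length u = 2 * n"
  proof -
    have "(\<Prod>i\<le>2 * n. qint q (1 + (\<Sum>j<i. bar (u ! j)))) = (\<Prod>i\<le>length u. qint q (1 + ht (take i u)))"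
      using that by (intro prod.cong) (auto simp: sum_bar_take)
    then show ?thesis using q1 by (simp add: prod_ht)
  qed
  have cat_ht: "catalan u \<Longrightarrow> ht u = 0"
    unfolding catalan_def using sum_bar_take[of "length u" u] by simp
  show ?thesis
  proof (cases "length u = 2 * n \<and> ht u = 0")
    case True
    show ?thesis
    proof (cases "catalan u")
      case True
      then show ?thesis using \<open>length u = 2 * n \<and> ht u = 0\<close> P by (simp add: Cn_def)
    next
      case False
      then obtain i where i: "1 \<le> i" "i \<le> length u - 1" "(\<Sum>j<i. bar (u ! j)) < 0"
        using \<open>length u = 2 * n \<and> ht u = 0\<close> sum_bar_take[of "length u" u]
        unfolding catalan_def by force
      then have "i \<le> length u" by simp
      then have "1 + ht (take i u) \<le> 0" using i sum_bar_take by fastforce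
      then have "pE q 1 u = 0" by (intro pE_zero_pos[of 1 i]) (use \<open>i \<le> length u\<close> in auto)
      then show ?thesis using False by (simp add: Cn_def)
    qed
  next
    case False
    then show ?thesis using cat_ht by (auto simp: Cn_def)
  qed
qed

lemma lcat_link:
  assumes q0: "q \<noteq> 0" and q2: "q^2 \<noteq> (1::'a::field)"
  shows "lcat X (Cn q n) w = (if ny w = n then Eh q 0 w else 0)"
proof (cases w)
  case Nil then show ?thesis by (simp add: lcat_def Eh_def)
next
  case (Cons d w')
  show ?thesis
  proof (cases d)
    case X
    have "(length w' = 2 * n \<and> ht w' = 0) = (ny w' = n \<and> ht w' = 0)"
      using ht_len_ny[of w'] by auto
    then show ?thesis using Cons X qint_1[OF q0 q2]
      by (auto simp: lcat_def Eh_def Cn_link[OF q0 q2])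
  next
    case Y
    have "pE q (-1) w' = 0" if "-1 + ht w' = 1" using that by (intro pE_zero_neg) auto
    then show ?thesis using Cons Y by (auto simp: lcat_def Eh_def)
  qed
qed

section \<open>Grading\<close>

lemma ny_sum: "int (ny u) = (\<Sum>c\<leftarrow>u. if c = Y then 1 else 0)"
  by (induction u) (auto simp: ny_def)

lemma ny_qsh: "qsh q u v w \<noteq> 0 \<Longrightarrow> ny w = ny u + ny v"
  using qsh_add[of q u v w "\<lambda>c. if c = Y then 1 else 0"] by (simp add: ny_sum[symmetric])

lemma ht_qsh: "qsh q u v w \<noteq> 0 \<Longrightarrow> ht w = ht u + ht v"
  using qsh_add[of q u v w bar] by (simp add: ht_def)

definition HM :: "nat \<Rightarrow> int \<Rightarrow> 'a::field vec \<Rightarrow> bool" where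
  "HM a b f \<longleftrightarrow> (\<forall>u. f u \<noteq> 0 \<longrightarrow> ny u = a \<and> ht u = b)"

lemma star_HM:
  assumes "HM a b f" "HM a' b' g"
  shows "HM (a + a') (b + b') (star q f g)"
  unfolding HM_def
proof (intro allI impI)
  fix w assume "star q f g w \<noteq> 0"
  then obtain u v where "f u * g v * qsh q u v w \<noteq> 0"
    unfolding star_LL by (meson sum.not_neutral_contains_not_neutral)
  then show "ny w = a + a' \<and> ht w = b + b'"
    using assms ny_qsh[of q u v w] ht_qsh[of q u v w] unfolding HM_def by auto
qed

lemma HM_zero: "HM a b f \<Longrightarrow> ny w \<noteq> a \<Longrightarrow> f w = 0"
  by (auto simp: HM_def)

definition resY :: "nat \<Rightarrow> 'a::field vec \<Rightarrow> 'a vec" where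
  "resY k f = (\<lambda>u. if ny u = k then f u else 0)"

lemma star_graded: "star q f g w = (\<Sum>k\<le>ny w. star q (resY k f) (resY (ny w - k) g) w)"
proof -
  let ?N = "ny w"
  let ?L = "LL (length w)"
  have "(\<Sum>k\<le>?N. star q (resY k f) (resY (?N - k) g) w)
     = (\<Sum>k\<le>?N. \<Sum>u\<in>?L. \<Sum>v\<in>?L. resY k f u * resY (?N - k) g v * qsh q u v w)"
    by (simp add: star_LL)
  also have "\<dots> = (\<Sum>u\<in>?L. \<Sum>k\<le>?N. \<Sum>v\<in>?L. resY k f u * resY (?N - k) g v * qsh q u v w)"
    by (rule sum.swap)
  also have "\<dots> = (\<Sum>u\<in>?L. \<Sum>v\<in>?L. \<Sum>k\<le>?N. resY k f u * resY (?N - k) g v * qsh q u v w)"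
    by (intro sum.cong refl) (rule sum.swap)
  also have "\<dots> = (\<Sum>u\<in>?L. \<Sum>v\<in>?L. f u * g v * qsh q u v w)"
  proof (intro sum.cong refl)
    fix u v
    show "(\<Sum>k\<le>?N. resY k f u * resY (?N - k) g v * qsh q u v w) = f u * g v * qsh q u v w"
    proof (cases "qsh q u v w = 0")
      case False
      then have e: "?N = ny u + ny v" by (rule ny_qsh)
      have "(\<Sum>k\<le>?N. resY k f u * resY (?N - k) g v * qsh q u v w)
          = (\<Sum>k\<le>?N. if ny u = k then f u * g v * qsh q u v w else 0)"
        by (intro sum.cong refl) (auto simp: resY_def e)
      also have "\<dots> = f u * g v * qsh q u v w"
        using e by (simp add: sum.delta)
      finally show ?thesis .
    qed simp
  qed
  finally show ?thesis by (simp add: star_LL)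
qed

definition ser :: "'a::field \<Rightarrow> (nat \<Rightarrow> 'a vec) \<Rightarrow> 'a vec" where
  "ser m F = (\<lambda>u. m ^ ny u * F (ny u) u)"

lemma resY_ser: "HM k b (F k) \<Longrightarrow> resY k (ser m F) = (\<lambda>u. m ^ k * F k u)"
  by (auto simp: resY_def ser_def fun_eq_iff HM_def)

lemma star_ser:
  assumes "\<And>k. HM k (b1 :: int) (F k)" "\<And>k. HM k (b2 :: int) (G k)"
  shows "star q (ser m F) (ser m G) w = m ^ ny w * (\<Sum>k\<le>ny w. star q (F k) (G (ny w - k)) w)"
proof -
  have "star q (ser m F) (ser m G) w = (\<Sum>k\<le>ny w. star q (\<lambda>u. m ^ k * F k u) (\<lambda>u. m ^ (ny w - k) * G (ny w - k) u) w)"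
    by (subst star_graded) (simp add: resY_ser[OF assms(1)] resY_ser[OF assms(2)])
  also have "\<dots> = (\<Sum>k\<le>ny w. m ^ ny w * star q (F k) (G (ny w - k)) w)"
  proof (intro sum.cong refl)
    fix k assume "k \<in> {..ny w}"
    then have "m ^ k * m ^ (ny w - k) = m ^ ny w" by (simp add: power_add[symmetric])
    then show "star q (\<lambda>u. m ^ k * F k u) (\<lambda>u. m ^ (ny w - k) * G (ny w - k) u) w = m ^ ny w * star q (F k) (G (ny w - k)) w"
      by (simp add: star_smul_left star_smul_right mult.assoc[symmetric])
  qed
  also have "\<dots> = m ^ ny w * (\<Sum>k\<le>ny w. star q (F k) (G (ny w - k)) w)"
    by (simp add: sum_distrib_left)
  finally show ?thesis .
qed

lemma sum_rev_atMost: "(\<Sum>k\<le>n. f k (n - k)) = (\<Sum>i\<le>(n::nat). f (n - i) i)"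
  by (rule sum.reindex_bij_witness[where i="\<lambda>i. n - i" and j="\<lambda>i. n - i"]) auto

lemma ht_alt: "ht (alt c n) = (if even n then 0 else bar c)"
  by (induction n arbitrary: c) (auto simp: alt_Suc, (case_tac c; simp)+)

lemma HM_Gt: "HM k 0 (Gt k)"
  by (auto simp: HM_def Gt_def wd_def ny_alt ht_alt split: if_splits)
lemma HM_Wneg: "HM k 1 (Wneg k)"
  by (auto simp: HM_def Wneg_def wd_def ny_alt ht_alt split: if_splits)

lemma AXs_ser: "AXs m = ser m Gt"
proof
  fix u
  have "(even (length u) \<and> u = alt X (length u)) = (u = alt X (2 * ny u))"
  proof
    assume a: "even (length u) \<and> u = alt X (length u)"
    then have "ny u = length u div 2" using ny_alt[of X "length u"] by simp
    then have "2 * ny u = length u" using a by simp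
    then show "u = alt X (2 * ny u)" using a by simp
  next
    assume a: "u = alt X (2 * ny u)"
    then have "length u = 2 * ny u" by (metis alt_len)
    then show "even (length u) \<and> u = alt X (length u)" using a by simp
  qed
  then show "AXs m u = ser m Gt u"
    by (simp add: AXs_def ser_def Gt_def wd_def)
qed

lemma AltX_ser: "AltX m = ser m Wneg"
proof
  fix u
  have "(odd (length u) \<and> u = alt X (length u)) = (u = alt X (2 * ny u + 1))"
  proof
    assume a: "odd (length u) \<and> u = alt X (length u)"
    then have "ny u = length u div 2" using ny_alt[of X "length u"] by simp
    then have "2 * ny u + 1 = length u" using a by simp
    then show "u = alt X (2 * ny u + 1)" using a by simp
  next
    assume a: "u = alt X (2 * ny u + 1)"
    then have "length u = 2 * ny u + 1" by (metis alt_len)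
    then show "odd (length u) \<and> u = alt X (length u)" using a by simp
  qed
  then show "AltX m u = ser m Wneg u"
    by (simp add: AltX_def ser_def Wneg_def wd_def)
qed

section \<open>Symmetry sigma\<close>

lemma alt_snoc: "alt d (Suc n) = alt d n @ [if even n then d else swp d]"
proof (induction n arbitrary: d)
  case 0 then show ?case by (simp add: alt_Suc)
next
  case (Suc n)
  have "alt d (Suc (Suc n)) = d # alt (swp d) (Suc n)" by (rule alt_Suc)
  also have "\<dots> = d # (alt (swp d) n @ [if even n then swp d else swp (swp d)])"
    using Suc.IH[of "swp d"] by simp
  also have "\<dots> = alt d (Suc n) @ [if even (Suc n) then d else swp d]"
    by (simp add: alt_Suc[of d n])
  finally show ?case .
qed

lemma map_swp_alt: "map swp (alt c n) = alt (swp c) n"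
  by (induction n arbitrary: c) (auto simp: alt_Suc)

lemma rev_alt: "rev (alt c n) = alt (if even n then swp c else c) n"
proof (induction n arbitrary: c)
  case 0 then show ?case by simp
next
  case (Suc n)
  have "rev (alt c (Suc n)) = rev (alt (swp c) n) @ [c]" by (simp add: alt_Suc)
  also have "\<dots> = alt (if even n then c else swp c) n @ [c]" by (simp add: Suc.IH)
  also have "\<dots> = alt (if even (Suc n) then swp c else c) (Suc n)"
    by (simp add: alt_snoc)
  finally show ?case .
qed

lemma sig_alt: "sig (alt c n) = alt (if even n then c else swp c) n"
  by (simp add: sig_def map_swp_alt rev_alt)

lemma sig_eq_iff: "(sig w = u) = (w = sig u)"
  by (metis sig_sig)

lemma sg_wd: "sg (wd u) = wd (sig u)"
  by (auto simp: sg_def wd_def fun_eq_iff sig_eq_iff)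

lemma sg_Gt: "sg (Gt j) = Gt j"
  by (simp add: Gt_def sg_wd sig_alt)
lemma sg_Wneg: "sg (Wneg j) = Wpos j"
proof -
  have "sig (alt X (2 * j + 1)) = alt Y (2 * j + 1)"
    by (simp only: sig_alt) simp
  then show ?thesis by (simp only: Wneg_def Wpos_def sg_wd)
qed
lemma sg_Wpos: "sg (Wpos j) = Wneg j"
proof -
  have "sig (alt Y (2 * j + 1)) = alt X (2 * j + 1)"
    by (simp only: sig_alt) simp
  then show ?thesis by (simp only: Wneg_def Wpos_def sg_wd)
qed

lemma bar_swp[simp]: "bar (swp c) = - bar c" by (cases c) auto

lemma ht_sig: "ht (sig u) = - ht u"
  by (induction u) auto

lemma ny_sig: "ny (sig u) = length u - ny u"
proof (induction u)
  case Nil then show ?case by simp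
next
  case (Cons c u)
  have "ny u \<le> length u" by (simp add: ny_def)
  then show ?case using Cons by (cases c) (simp_all add: ny_def sig_def Suc_diff_le)
qed

fun pB :: "'a::field \<Rightarrow> int \<Rightarrow> letter list \<Rightarrow> 'a" where
  "pB q h [] = 1"
| "pB q h (c # u) = qint q h * pB q (h + bar c) u"

lemma pE_snoc: "pE q h (u @ [c]) = pE q h u * qint q (h + ht u + bar c)"
  by (induction u arbitrary: h) (auto simp: algebra_simps)

lemma pE_sig: "pE q (h + ht u) (sig u) = pB q h u"
proof (induction u arbitrary: h)
  case Nil then show ?case by simp
next
  case (Cons c u)
  have "pE q (h + ht (c # u)) (sig (c # u)) = pE q ((h + bar c) + ht u) (sig u) * qint q h"
    by (simp add: pE_snoc ht_sig algebra_simps)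
  also have "\<dots> = pB q h (c # u)" using Cons.IH by simp
  finally show ?case .
qed

lemma pB_pE: "qint q h * pE q h u = pB q h u * qint q (h + ht u)"
  by (induction u arbitrary: h) (auto simp: algebra_simps)

lemma sg_Cn:
  assumes q0: "q \<noteq> 0" and q2: "q^2 \<noteq> (1::'a::field)"
  shows "sg (Cn q n) = Cn q n"
proof
  fix u
  have q1: "qint q 1 = 1" by (rule qint_1[OF q0 q2])
  show "sg (Cn q n) u = Cn q n u"
  proof (cases "length u = 2 * n \<and> ht u = 0")
    case True
    then have "pE q 1 (sig u) = pB q 1 u" using pE_sig[of q 1 u] by simp
    moreover have "pE q 1 u = pB q 1 u" using pB_pE[of q 1 u] True q1 by simp
    ultimately show ?thesis using True by (simp add: sg_def Cn_link[OF q0 q2] ht_sig)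
  next
    case False
    then show ?thesis by (auto simp: sg_def Cn_link[OF q0 q2] ht_sig)
  qed
qed

lemma rcat_link: "rcat f Y w = lcat X (sg f) (sig w)"
proof (cases w rule: rev_exhaust)
  case Nil then show ?thesis by (simp add: rcat_def lcat_def)
next
  case (snoc v d)
  then show ?thesis by (cases d) (auto simp: rcat_def lcat_def sg_def sig_append)
qed

lemma Gt0: "Gt 0 = wd []" by (simp add: Gt_def)

lemma HM_wdNil: "HM 0 0 (wd [])" by (simp add: HM_def wd_def)

lemma sum_atMost_split_last: "(\<Sum>i\<le>(n::nat). f i) = (\<Sum>i<n. f i) + (f n :: 'a::comm_monoid_add)"
  using sum.lessThan_Suc[of f n] by (simp add: lessThan_Suc_atMost)

context
  fixes q :: "'a::field" and D :: "nat \<Rightarrow> 'a vec"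
  assumes q0: "q \<noteq> 0"
    and q2: "q^2 \<noteq> 1"
    and D0: "D 0 = wd []"
    and Drec: "\<forall>n\<ge>1. (\<lambda>w. \<Sum>i\<le>n. star q (D i) (Gt (n - i)) w) = (\<lambda>w. 0)"
begin

lemma Drec_pt: "n \<ge> 1 \<Longrightarrow> (\<Sum>i\<le>n. star q (D i) (Gt (n - i)) w) = 0"
proof -
  assume "n \<ge> 1"
  then have "(\<lambda>w. \<Sum>i\<le>n. star q (D i) (Gt (n - i)) w) = (\<lambda>w. 0)" using Drec by blast
  from fun_cong[OF this, of w] show ?thesis by simp
qed

lemma D_rec: "n \<ge> 1 \<Longrightarrow> D n w = - (\<Sum>i<n. star q (D i) (Gt (n - i)) w)"
proof -
  assume n: "n \<ge> 1"
  have "(\<Sum>i\<le>n. star q (D i) (Gt (n - i)) w) = (\<Sum>i<n. star q (D i) (Gt (n - i)) w) + star q (D n) (Gt (n - n)) w"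
    by (rule sum_atMost_split_last)
  also have "star q (D n) (Gt (n - n)) w = D n w" by (simp add: Gt0 star_wd_Nil_right)
  finally have "(\<Sum>i<n. star q (D i) (Gt (n - i)) w) + D n w = 0" using Drec_pt[OF n] by simp
  then show ?thesis by (simp add: add_eq_0_iff)
qed

lemma HM_D: "HM k 0 (D k)"
proof (induction k rule: less_induct)
  case (less k)
  show ?case
  proof (cases "k = 0")
    case True then show ?thesis using D0 HM_wdNil by simp
  next
    case False
    show ?thesis unfolding HM_def
    proof (intro allI impI)
      fix u assume "D k u \<noteq> 0"
      then have "(\<Sum>i<k. star q (D i) (Gt (k - i)) u) \<noteq> 0" using D_rec[of k u] False by simp
      then obtain i where i: "i < k" "star q (D i) (Gt (k - i)) u \<noteq> 0"
        by (meson sum.not_neutral_contains_not_neutral lessThan_iff)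
      have "HM (i + (k - i)) (0 + 0) (star q (D i) (Gt (k - i)))"
        by (rule star_HM[OF less.IH[OF i(1)] HM_Gt])
      then show "ny u = k \<and> ht u = 0" using i unfolding HM_def by auto
    qed
  qed
qed

lemma DG_one: "star q (ser m D) (AXs m) = wd []"
proof
  fix w
  have "star q (ser m D) (AXs m) w = m ^ ny w * (\<Sum>k\<le>ny w. star q (D k) (Gt (ny w - k)) w)"
    unfolding AXs_ser by (rule star_ser[OF HM_D HM_Gt])
  also have "\<dots> = wd [] w"
  proof (cases "ny w = 0")
    case True
    then show ?thesis by (simp add: D0 Gt0 star_wd_Nil_left)
  next
    case False
    then have "w \<noteq> []" by auto
    then show ?thesis using Drec_pt[of "ny w" w] False by (simp add: wd_def)
  qed
  finally show "star q (ser m D) (AXs m) w = wd [] w" .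
qed

definition sD :: "nat \<Rightarrow> 'a vec" where "sD k = sg (D k)"

lemma HM_sD: "HM k 0 (sD k)"
  unfolding HM_def
proof (intro allI impI)
  fix u assume "sD k u \<noteq> 0"
  then have "D k (sig u) \<noteq> 0" by (simp add: sD_def sg_def)
  then have a: "ny (sig u) = k" "ht (sig u) = 0" using HM_D[of k] by (auto simp: HM_def)
  then have h: "ht u = 0" by (simp add: ht_sig)
  have "ny u \<le> length u" by (simp add: ny_def)
  then show "ny u = k \<and> ht u = 0" using a h ht_len_ny[of u] ny_sig[of u] by auto
qed

lemma sDrec: "n \<ge> 1 \<Longrightarrow> (\<Sum>i\<le>n. star q (Gt (n - i)) (sD i) w) = 0"
proof -
  assume "n \<ge> 1"
  have "(\<Sum>i\<le>n. star q (Gt (n - i)) (sD i) w) = (\<Sum>i\<le>n. star q (D i) (Gt (n - i)) (sig w))"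
    by (simp add: star_sig[OF q0] sD_def sg_Gt)
  then show ?thesis using Drec_pt[OF \<open>n \<ge> 1\<close>] by simp
qed

lemma GsD_one: "star q (AXs m) (ser m sD) = wd []"
proof
  fix w
  have "star q (AXs m) (ser m sD) w = m ^ ny w * (\<Sum>k\<le>ny w. star q (Gt k) (sD (ny w - k)) w)"
    unfolding AXs_ser by (rule star_ser[OF HM_Gt HM_sD])
  also have "\<dots> = m ^ ny w * (\<Sum>i\<le>ny w. star q (Gt (ny w - i)) (sD i) w)"
    by (simp only: sum_rev_atMost[of "\<lambda>a b. star q (Gt a) (sD b) w"])
  also have "\<dots> = wd [] w"
  proof (cases "ny w = 0")
    case True
    have "sD 0 = wd []" by (simp add: sD_def D0 sg_wd)
    then show ?thesis using True by (simp add: Gt0 star_wd_Nil_left)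
  next
    case False
    then have "w \<noteq> []" by auto
    then show ?thesis using sDrec[of "ny w" w] False by (simp add: wd_def)
  qed
  finally show "star q (AXs m) (ser m sD) w = wd [] w" .
qed

lemma ser_D_sD: "ser m D = ser m sD"
proof -
  have "ser m D = star q (ser m D) (wd [])" by (simp add: star_wd_Nil_right)
  also have "\<dots> = star q (ser m D) (star q (AXs m) (ser m sD))" by (simp add: GsD_one)
  also have "\<dots> = star q (star q (ser m D) (AXs m)) (ser m sD)" by (simp add: star_assoc[OF q0])
  also have "\<dots> = ser m sD" by (simp add: DG_one star_wd_Nil_left)
  finally show ?thesis .
qed

lemma GD_one: "star q (AXs m) (ser m D) = wd []"
  by (simp add: ser_D_sD GsD_one)

lemma sg_D: "sg (D k) = D k"
proof
  fix u
  show "sg (D k) u = D k u"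
  proof (cases "ny u = k")
    case True
    have "ser 1 D u = ser 1 sD u" by (simp add: ser_D_sD)
    then show ?thesis using True by (simp add: ser_def sD_def)
  next
    case False
    have a: "D k u = 0" using HM_D[of k] False unfolding HM_def by blast
    have b: "sg (D k) u = 0" using HM_sD[of k] False unfolding HM_def sD_def by blast
    show ?thesis by (simp add: a b)
  qed
qed

lemma claim2_ser: "Eh q 0 = star q (ser (-q) D) (AltX (-q))"
proof -
  have F: "star q (AXs (-q)) (Eh q 0) = AltX (-q)"
    using famF[OF q0 q2, of 0] by (simp add: fun_eq_iff)
  have "star q (ser (-q) D) (AltX (-q)) = star q (ser (-q) D) (star q (AXs (-q)) (Eh q 0))"
    by (simp add: F)
  also have "\<dots> = star q (star q (ser (-q) D) (AXs (-q))) (Eh q 0)" by (simp add: star_assoc[OF q0])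
  also have "\<dots> = Eh q 0" by (simp add: DG_one star_wd_Nil_left)
  finally show ?thesis by simp
qed

lemma claim1_ser: "Eh q 0 = star q (AltX (- inverse q)) (ser (- inverse q) D)"
proof -
  have G: "star q (Eh q 0) (AXs (- inverse q)) = AltX (- inverse q)"
    using famG[OF q0 q2, of 0] by (simp add: fun_eq_iff)
  have "star q (AltX (- inverse q)) (ser (- inverse q) D) = star q (star q (Eh q 0) (AXs (- inverse q))) (ser (- inverse q) D)"
    by (simp add: G)
  also have "\<dots> = star q (Eh q 0) (star q (AXs (- inverse q)) (ser (- inverse q) D))" by (simp add: star_assoc[OF q0])
  also have "\<dots> = Eh q 0" by (simp add: GD_one star_wd_Nil_right)
  finally show ?thesis by simp
qed

lemma claim1: "lcat X (Cn q n) w = smul ((-1) ^ n * q powi (- int n)) (\<lambda>w. \<Sum>i\<le>n. star q (Wneg i) (D (n - i)) w) w"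
proof (cases "ny w = n")
  case True
  have "lcat X (Cn q n) w = Eh q 0 w" using True by (simp add: lcat_link[OF q0 q2])
  also have "\<dots> = star q (ser (- inverse q) Wneg) (ser (- inverse q) D) w"
    using claim1_ser by (simp add: AltX_ser)
  also have "\<dots> = (- inverse q) ^ n * (\<Sum>i\<le>n. star q (Wneg i) (D (n - i)) w)"
    using True by (simp add: star_ser[OF HM_Wneg HM_D])
  also have "(- inverse q) ^ n = (-1) ^ n * q powi (- int n)"
  proof -
    have "(- inverse q) ^ n = (-1) ^ n * (inverse q) ^ n" by (rule power_minus)
    then show ?thesis by (simp add: power_int_minus power_inverse)
  qed
  finally show ?thesis by (simp add: smul_def)
next
  case False
  have "star q (Wneg i) (D (n - i)) w = 0" if "i \<le> n" for i
    using star_HM[OF HM_Wneg[of i] HM_D[of "n - i"], of q] that False unfolding HM_def by auto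
  then show ?thesis using False by (simp add: smul_def lcat_link[OF q0 q2])
qed

lemma claim2: "lcat X (Cn q n) w = smul ((-1) ^ n * q powi (int n)) (\<lambda>w. \<Sum>i\<le>n. star q (D (n - i)) (Wneg i) w) w"
proof (cases "ny w = n")
  case True
  have "lcat X (Cn q n) w = Eh q 0 w" using True by (simp add: lcat_link[OF q0 q2])
  also have "\<dots> = star q (ser (- q) D) (ser (- q) Wneg) w"
    using claim2_ser by (simp add: AltX_ser)
  also have "\<dots> = (- q) ^ n * (\<Sum>k\<le>n. star q (D k) (Wneg (n - k)) w)"
    using True by (simp add: star_ser[OF HM_D HM_Wneg])
  also have "(\<Sum>k\<le>n. star q (D k) (Wneg (n - k)) w) = (\<Sum>i\<le>n. star q (D (n - i)) (Wneg i) w)"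
    by (rule sum_rev_atMost[of "\<lambda>a b. star q (D a) (Wneg b) w"])
  also have "(- q) ^ n = (-1) ^ n * q powi (int n)"
  proof -
    have "(- q) ^ n = (-1) ^ n * q ^ n" by (rule power_minus)
    then show ?thesis by simp
  qed
  finally show ?thesis by (simp add: smul_def)
next
  case False
  have "star q (D (n - i)) (Wneg i) w = 0" if "i \<le> n" for i
    using star_HM[OF HM_D[of "n - i"] HM_Wneg[of i], of q] that False unfolding HM_def by auto
  then show ?thesis using False by (simp add: smul_def lcat_link[OF q0 q2])
qed

lemma claim3: "rcat (Cn q n) Y w = smul ((-1) ^ n * q powi (- int n)) (\<lambda>w. \<Sum>i\<le>n. star q (D (n - i)) (Wpos i) w) w"
proof -
  have "rcat (Cn q n) Y w = lcat X (Cn q n) (sig w)" by (simp add: rcat_link sg_Cn[OF q0 q2])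
  also have "\<dots> = smul ((-1) ^ n * q powi (- int n)) (\<lambda>w. \<Sum>i\<le>n. star q (Wneg i) (D (n - i)) w) (sig w)"
    by (rule claim1)
  also have "\<dots> = smul ((-1) ^ n * q powi (- int n)) (\<lambda>w. \<Sum>i\<le>n. star q (D (n - i)) (Wpos i) w) w"
    by (simp add: smul_def star_sig[OF q0] sg_D sg_Wneg)
  finally show ?thesis .
qed

lemma claim4: "rcat (Cn q n) Y w = smul ((-1) ^ n * q powi (int n)) (\<lambda>w. \<Sum>i\<le>n. star q (Wpos i) (D (n - i)) w) w"
proof -
  have "rcat (Cn q n) Y w = lcat X (Cn q n) (sig w)" by (simp add: rcat_link sg_Cn[OF q0 q2])
  also have "\<dots> = smul ((-1) ^ n * q powi (int n)) (\<lambda>w. \<Sum>i\<le>n. star q (D (n - i)) (Wneg i) w) (sig w)"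
    by (rule claim2)
  also have "\<dots> = smul ((-1) ^ n * q powi (int n)) (\<lambda>w. \<Sum>i\<le>n. star q (Wpos i) (D (n - i)) w) w"
    by (simp add: smul_def star_sig[OF q0] sg_D sg_Wneg)
  finally show ?thesis .
qed

end

theorem theorem11p3:
  fixes q :: "'a::field" and D :: "nat \<Rightarrow> 'a vec"
  assumes q_nz: "q \<noteq> 0"
    and q_not_root: "\<forall>m::nat. m > 0 \<longrightarrow> q ^ m \<noteq> 1"
    and D0: "D 0 = wd []"
    and Drec: "\<forall>n\<ge>1. (\<lambda>w. \<Sum>i\<le>n. star q (D i) (Gt (n - i)) w) = (\<lambda>w. 0)"
  shows "\<forall>n::nat.
     lcat X (Cn q n) = smul ((-1) ^ n * q powi (- int n))
                          (\<lambda>w. \<Sum>i\<le>n. star q (Wneg i) (D (n - i)) w)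
   \<and> lcat X (Cn q n) = smul ((-1) ^ n * q powi (int n))
                          (\<lambda>w. \<Sum>i\<le>n. star q (D (n - i)) (Wneg i) w)
   \<and> rcat (Cn q n) Y = smul ((-1) ^ n * q powi (- int n))
                          (\<lambda>w. \<Sum>i\<le>n. star q (D (n - i)) (Wpos i) w)
   \<and> rcat (Cn q n) Y = smul ((-1) ^ n * q powi (int n))
                          (\<lambda>w. \<Sum>i\<le>n. star q (Wpos i) (D (n - i)) w)"
proof -
  have q2: "q^2 \<noteq> 1" using q_not_root by auto
  show ?thesis
    apply (intro allI conjI ext)
       apply (rule claim1[OF q_nz q2 D0 Drec])
      apply (rule claim2[OF q_nz q2 D0 Drec])
     apply (rule claim3[OF q_nz q2 D0 Drec])
    apply (rule claim4[OF q_nz q2 D0 Drec])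
    done
qed

end
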